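(* Let $\mathcal{H}_r$ be a Hirzebruch surface, $\beta=aD_1+bD_2$ with $a>rb$ and $b>0$ (an ample class), $f\in S_\beta$ nondegenerate, and $Z=\{f=0\}$. Then the linear system $J_1(f)_\beta\subset S_\beta=H^0(\mathcal{H}_r,\mathcal{O}(aD_1+bD_2))$ restricted to $Z$ is base point free, and the morphism it induces on $Z$ is birational onto its image.
   Context: $\mathcal{H}_r$ ($r\ge0$) is the smooth complete toric surface with ray generators $u_1=(-1,r)$, $u_2=(0,1)$, $u_3=(1,0)$, $u_4=(0,-1)$ and torus-invariant divisors $D_1,\dots,D_4$. Its Cox ring is $S=\mathbb{C}[x_1,x_2,x_3,x_4]$ graded by $\operatorname{Pic}=\mathbb{Z}D_1\oplus\mathbb{Z}D_2$ with $\deg x_1=\deg x_3=D_1$, $\deg x_2=D_2$, $\deg x_4=rD_1+D_2$; $\mathcal{H}_r$ is the quotient of $\mathbb{C}^4\setminus V(x_3x_4,x_1x_4,x_1x_2,x_2x_3)$ by $(\lambda,\mu)\cdot(x_1,x_2,x_3,x_4)=(\lambda x_1,\mu x_2,\lambda x_3,\lambda^r\mu x_4)$. $f\in S_\beta$ ($\beta$ ample) is nondegenerate if $x_i\partial f/\partial x_i$ ($i=1,\dots,4$) have no common zero on $\mathcal{H}_r$. $J_0(f)=\langle x_i\partial f/\partial x_i\rangle$, $J_1(f)=J_0(f):\langle x_1x_2x_3x_4\rangle$, $J_1(f)_\beta=J_1(f)\cap S_\beta$. *)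

theory Defs
  imports Complex_Main "HOL-Library.Poly_Mapping"
begin

text \<open>A monomial is an exponent vector (nat =>0 nat), a polynomial a finitely
  supported map from monomials to coefficients; multiplication is the
  library's convolution (comm_ring_1 instance).\<close>

type_synonym mpoly = "(nat \<Rightarrow>\<^sub>0 nat) \<Rightarrow>\<^sub>0 complex"

definition var :: "nat \<Rightarrow> mpoly" where
  "var i = Poly_Mapping.single (Poly_Mapping.single i 1) 1"

text \<open>Cox ring S = C[x_1,x_2,x_3,x_4]: only variables 1..4 occur.\<close>
definition in_S :: "mpoly \<Rightarrow> bool" where
  "in_S p \<longleftrightarrow> (\<forall>m \<in> Poly_Mapping.keys p. Poly_Mapping.keys m \<subseteq> {1,2,3,4})"

text \<open>Pic-degree of a monomial, in the basis D_1, D_2: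
  deg x_1 = deg x_3 = D_1, deg x_2 = D_2, deg x_4 = r D_1 + D_2.\<close>
definition mon_deg :: "nat \<Rightarrow> (nat \<Rightarrow>\<^sub>0 nat) \<Rightarrow> nat \<times> nat" where
  "mon_deg r m = (Poly_Mapping.lookup m 1 + Poly_Mapping.lookup m 3 + r * Poly_Mapping.lookup m 4, Poly_Mapping.lookup m 2 + Poly_Mapping.lookup m 4)"

definition in_S_deg :: "nat \<Rightarrow> nat \<Rightarrow> nat \<Rightarrow> mpoly \<Rightarrow> bool" where
  "in_S_deg r a b p \<longleftrightarrow> in_S p \<and> (\<forall>m \<in> Poly_Mapping.keys p. mon_deg r m = (a, b))"

definition eval :: "mpoly \<Rightarrow> (nat \<Rightarrow> complex) \<Rightarrow> complex" where
  "eval p x = (\<Sum>m \<in> Poly_Mapping.keys p. Poly_Mapping.lookup p m * (\<Prod>j \<in> Poly_Mapping.keys m. x j ^ Poly_Mapping.lookup m j))"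

definition pderiv :: "nat \<Rightarrow> mpoly \<Rightarrow> mpoly" where
  "pderiv i p = Abs_poly_mapping
     (\<lambda>m. of_nat (Poly_Mapping.lookup m i + 1) * Poly_Mapping.lookup p (m + Poly_Mapping.single i 1))"

definition logder :: "nat \<Rightarrow> mpoly \<Rightarrow> mpoly" where
  "logder i f = var i * pderiv i f"

definition in_U :: "(nat \<Rightarrow> complex) \<Rightarrow> bool" where
  "in_U x \<longleftrightarrow> x 3 * x 4 \<noteq> 0 \<or> x 1 * x 4 \<noteq> 0 \<or> x 1 * x 2 \<noteq> 0 \<or> x 2 * x 3 \<noteq> 0"

text \<open>Two points of U define the same point of H_r iff they lie in the same
  orbit of (lambda, mu).(x1,x2,x3,x4) = (lambda x1, mu x2, lambda x3, lambda^r mu x4).\<close>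
definition hr_equiv :: "nat \<Rightarrow> (nat \<Rightarrow> complex) \<Rightarrow> (nat \<Rightarrow> complex) \<Rightarrow> bool" where
  "hr_equiv r x y \<longleftrightarrow> (\<exists>l u. l \<noteq> 0 \<and> u \<noteq> 0 \<and>
      y 1 = l * x 1 \<and> y 2 = u * x 2 \<and> y 3 = l * x 3 \<and> y 4 = l ^ r * u * x 4)"

definition nondegenerate :: "mpoly \<Rightarrow> bool" where
  "nondegenerate f \<longleftrightarrow> \<not> (\<exists>x. in_U x \<and> (\<forall>i \<in> {1,2,3,4}. eval (logder i f) x = 0))"

definition in_Z :: "mpoly \<Rightarrow> (nat \<Rightarrow> complex) \<Rightarrow> bool" where
  "in_Z f x \<longleftrightarrow> in_U x \<and> eval f x = 0"

definition J0 :: "mpoly \<Rightarrow> mpoly set" where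
  "J0 f = {g. \<exists>h. (\<forall>i. in_S (h i)) \<and> g = (\<Sum>i \<in> {1,2,3,4}. h i * logder i f)}"

text \<open>J_1(f) = J_0(f) : <x_1 x_2 x_3 x_4>; since J_0(f) is an ideal,
  g is in the quotient iff x_1 x_2 x_3 x_4 g is in J_0(f).\<close>
definition J1 :: "mpoly \<Rightarrow> mpoly set" where
  "J1 f = {g. in_S g \<and> (var 1 * var 2 * var 3 * var 4) * g \<in> J0 f}"

definition J1_deg :: "nat \<Rightarrow> nat \<Rightarrow> nat \<Rightarrow> mpoly \<Rightarrow> mpoly set" where
  "J1_deg r a b f = {g \<in> J1 f. in_S_deg r a b g}"

end

theory Submission
  imports Defs "Subresultants.Subresultant_Gcd" "HOL-Computational_Algebra.Field_as_Ring"
    "HOL-Computational_Algebra.Fundamental_Theorem_Algebra"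
begin
definition ev2 :: "complex poly poly \<Rightarrow> complex \<Rightarrow> complex \<Rightarrow> complex" where
  "ev2 F s t = poly (map_poly (\<lambda>c. poly c s) F) t"

lemma ev2_mult: "ev2 (A * B) s t = ev2 A s t * ev2 B s t"
proof -
  interpret m: map_poly_comm_ring_hom "\<lambda>c::complex poly. poly c s" ..
  show ?thesis unfolding ev2_def by (simp add: m.hom_mult)
qed


lemma ev2_add: "ev2 (A + B) s t = ev2 A s t + ev2 B s t"
proof -
  interpret m: map_poly_comm_ring_hom "\<lambda>c::complex poly. poly c s" ..
  show ?thesis unfolding ev2_def by (simp add: m.hom_add)
qed

lemma ev2_deriv_t: "((\<lambda>t. ev2 F s t) has_field_derivative ev2 (pderiv F) s t) (at t)"
  unfolding ev2_def poly_hom.map_poly_pderiv by (rule poly_DERIV)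

lemma poly_sum_le: "degree (p::complex poly) \<le> n \<Longrightarrow> poly p x = (\<Sum>i\<le>n. coeff p i * x ^ i)"
proof -
  assume "degree p \<le> n"
  have "poly p x = (\<Sum>i\<le>degree p. coeff p i * x ^ i)" by (rule poly_altdef)
  also have "\<dots> = (\<Sum>i\<le>n. coeff p i * x ^ i)"
    by (rule sum.mono_neutral_left) (use \<open>degree p \<le> n\<close> in \<open>auto simp: coeff_eq_0\<close>)
  finally show ?thesis .
qed

lemma ev2_sum: "ev2 F s t = (\<Sum>k\<le>degree F. poly (coeff F k) s * t ^ k)"
  unfolding ev2_def
  apply (subst poly_sum_le[of "map_poly (\<lambda>c. poly c s) F" "degree F" t])
   apply (rule degree_map_poly_le)
  apply (rule sum.cong, simp)
  apply (subst coeff_map_poly, simp, simp)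
  done

lemma ev2_sum_map: "ev2 (map_poly pderiv F) s t = (\<Sum>k\<le>degree F. poly (pderiv (coeff F k)) s * t ^ k)"
  unfolding ev2_def
  apply (subst poly_sum_le[of "map_poly (\<lambda>c. poly c s) (map_poly pderiv F)" "degree F" t])
   apply (rule order.trans[OF degree_map_poly_le], rule degree_map_poly_le)
  apply (rule sum.cong, simp)
  apply (subst coeff_map_poly, simp)
  apply (subst coeff_map_poly, simp, simp)
  done

lemma ev2_deriv_s: "((\<lambda>s. ev2 F s t) has_field_derivative ev2 (map_poly pderiv F) s t) (at s)"
  unfolding ev2_sum_map
  unfolding ev2_sum
  apply (rule DERIV_sum)
  apply (rule DERIV_cmult_right)
  apply (rule poly_DERIV)
  done
lemma exists_nonroot: "(q::complex poly) \<noteq> 0 \<Longrightarrow> \<exists>s. poly q s \<noteq> 0"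
proof -
  assume "q \<noteq> 0"
  hence "finite {x. poly q x = 0}" by (rule poly_roots_finite)
  then obtain s where "s \<notin> {x. poly q x = 0}"
    using ex_new_if_finite[OF infinite_UNIV_char_0] by blast
  thus ?thesis by auto
qed

lemma degree_prod_mset_0:
  "(\<forall>p\<in>#M. degree (p::complex poly poly) = 0) \<Longrightarrow> degree (prod_mset M) = 0"
proof (induction M)
  case empty then show ?case by simp
next
  case (add x M)
  have "degree (prod_mset (add_mset x M)) \<le> degree x + degree (prod_mset M)"
    by (simp add: degree_mult_le)
  with add show ?case by simp
qed

lemma prime_factor_deg:
  fixes G :: "complex poly poly"
  assumes "G \<noteq> 0" "degree G \<noteq> 0"
  shows "\<exists>H. prime H \<and> H dvd G \<and> degree H \<noteq> 0"
proof (rule ccontr)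
  assume nex: "\<not> ?thesis"
  define P where "P = prod_mset (prime_factorization G)"
  have nP: "normalize P = normalize G" unfolding P_def
    by (rule prod_mset_prime_factorization_weak[OF assms(1)])
  have "\<forall>p\<in>#prime_factorization G. degree p = 0"
  proof
    fix p assume "p \<in># prime_factorization G"
    hence "prime p" "p dvd G"
      by (auto simp: in_prime_factors_imp_prime in_prime_factors_imp_dvd)
    with nex show "degree p = 0" by blast
  qed
  hence dP: "degree P = 0" unfolding P_def by (rule degree_prod_mset_0)
  have "P \<noteq> 0" using nP assms(1) by auto
  have "G dvd P"
  proof -
    have "G dvd normalize P" using nP by simp
    thus ?thesis by simp
  qed
  from dvd_imp_degree_le[OF this \<open>P \<noteq> 0\<close>] dP assms(2) show False by simp
qed

lemma ev2_const: "ev2 [:c:] s t = poly c s"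
  unfolding ev2_def by (cases "c = 0") (auto simp: map_poly_pCons)

lemma core_lemma:
  fixes F :: "complex poly poly"
  assumes H1: "\<And>s t. ev2 F s t = 0 \<Longrightarrow> ev2 (pderiv F) s t = 0 \<Longrightarrow> ev2 (map_poly pderiv F) s t \<noteq> 0"
  and H2: "\<And>s. \<exists>t. ev2 F s t \<noteq> 0"
  shows "finite {(s,t). ev2 F s t = 0 \<and> ev2 (pderiv F) s t = 0}"
proof -
  have F0: "F \<noteq> 0" using H2[of 0] by (auto simp: ev2_def)
  define R where "R = resultant F (pderiv F)"
  show ?thesis
  proof (cases "degree F = 0")
    case True
    then obtain c where Fc: "F = [:c:]" by (metis degree_eq_zeroE)
    have "{(s,t). ev2 F s t = 0 \<and> ev2 (pderiv F) s t = 0} = {}"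
    proof -
      have "\<And>s. poly c s \<noteq> 0" using H2 by (simp add: Fc ev2_const)
      thus ?thesis by (auto simp: Fc ev2_const)
    qed
    thus ?thesis by (metis finite.emptyI)
  next
    case degF: False
    have R0: "R \<noteq> 0"
    proof
      assume "R = 0"
      hence dg: "degree (gcd F (pderiv F)) \<noteq> 0" unfolding R_def using resultant_0_gcd by blast
      have "gcd F (pderiv F) \<noteq> 0" using F0 by simp
      from prime_factor_deg[OF this dg] obtain H where H: "prime H" "H dvd gcd F (pderiv F)" "degree H \<noteq> 0"
        by blast
      have "H dvd F" "H dvd pderiv F" using H(2) dvd_trans by auto
      then obtain K where K: "F = H * K" by (auto elim: dvdE)
      have "pderiv F = H * pderiv K + K * pderiv H" unfolding K by (rule pderiv_mult)
      with \<open>H dvd pderiv F\<close> have "H dvd K * pderiv H"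
        by (metis dvd_add_right_iff dvd_triv_left)
      hence "H dvd K \<or> H dvd pderiv H" using H(1) prime_dvd_mult_iff by blast
      moreover have "\<not> H dvd pderiv H"
      proof
        assume "H dvd pderiv H"
        moreover have "pderiv H \<noteq> 0" using H(3) by (simp add: pderiv_eq_0_iff)
        ultimately have "degree H \<le> degree (pderiv H)" by (rule dvd_imp_degree_le)
        with H(3) show False by (simp add: degree_pderiv)
      qed
      ultimately obtain L where L: "K = H * L" by (auto elim: dvdE)
      have FHL: "F = H * (H * L)" using K L by simp
      have "H \<noteq> 0" using H(1) by auto
      hence "lead_coeff H \<noteq> 0" by simp
      then obtain s0 where s0: "poly (lead_coeff H) s0 \<noteq> 0" using exists_nonroot by blast
      define Hs where "Hs = map_poly (\<lambda>c. poly c s0) H"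
      have "coeff Hs (degree H) \<noteq> 0" unfolding Hs_def using s0 by (simp add: coeff_map_poly)
      hence "degree Hs \<ge> degree H" by (rule le_degree)
      hence "degree Hs \<noteq> 0" using H(3) by simp
      then obtain t0 where t0: "poly Hs t0 = 0"
        using fundamental_theorem_of_algebra_alt[of Hs] by (metis degree_pCons_eq_if pCons_0_0 degree_0)
      have Hz: "ev2 H s0 t0 = 0" using t0 unfolding Hs_def ev2_def .
      have a1: "ev2 F s0 t0 = 0" unfolding FHL ev2_mult Hz by simp
      have a2: "ev2 (pderiv F) s0 t0 = 0"
        unfolding FHL pderiv_mult by (simp add: ev2_mult ev2_add Hz)
      have "((\<lambda>s. ev2 F s t0) has_field_derivative
          ev2 (map_poly pderiv H) s0 t0 * (ev2 H s0 t0 * ev2 L s0 t0) +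
          (ev2 (map_poly pderiv H) s0 t0 * ev2 L s0 t0 + ev2 (map_poly pderiv L) s0 t0 * ev2 H s0 t0) *
          ev2 H s0 t0) (at s0)"
        unfolding FHL ev2_mult
        using DERIV_mult[OF ev2_deriv_s[where F=H and t=t0 and s=s0] 
           DERIV_mult[OF ev2_deriv_s[where F=H and t=t0 and s=s0] ev2_deriv_s[where F=L and t=t0 and s=s0]]]
        by simp
      hence "ev2 (map_poly pderiv F) s0 t0 = 
          ev2 (map_poly pderiv H) s0 t0 * (ev2 H s0 t0 * ev2 L s0 t0) +
          (ev2 (map_poly pderiv H) s0 t0 * ev2 L s0 t0 + ev2 (map_poly pderiv L) s0 t0 * ev2 H s0 t0) *
          ev2 H s0 t0"
        using ev2_deriv_s DERIV_unique by blast
      hence a3: "ev2 (map_poly pderiv F) s0 t0 = 0" by (simp add: Hz ev2_mult)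
      from H1[OF a1 a2] a3 show False by simp
    qed
    have lc0: "lead_coeff F \<noteq> 0" using F0 by simp
    define S0 where "S0 = {s. poly (lead_coeff F) s = 0} \<union> {s. poly R s = 0}"
    have fS0: "finite S0" unfolding S0_def using poly_roots_finite R0 lc0 by auto
    have sub: "{(s,t). ev2 F s t = 0 \<and> ev2 (pderiv F) s t = 0} \<subseteq> (\<Union>s\<in>S0. {s} \<times> {t. ev2 F s t = 0})"
    proof (safe)
      fix s t assume e1: "ev2 F s t = 0" and e2: "ev2 (pderiv F) s t = 0"
      show "(s, t) \<in> (\<Union>s\<in>S0. {s} \<times> {t. ev2 F s t = 0})"
      proof (cases "poly (lead_coeff F) s = 0")
        case True thus ?thesis using e1 unfolding S0_def by auto
      next
        case lcs: False
        define h where "h = (\<lambda>c::complex poly. poly c s)"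
        interpret h: comm_ring_hom h unfolding h_def ..
        define Fs where "Fs = map_poly h F"
        define Gs where "Gs = map_poly h (pderiv F)"
        have dFs: "degree Fs = degree F"
        proof -
          have "coeff Fs (degree F) \<noteq> 0" unfolding Fs_def h_def using lcs by (simp add: coeff_map_poly)
          hence "degree Fs \<ge> degree F" by (rule le_degree)
          moreover have "degree Fs \<le> degree F" unfolding Fs_def by (rule degree_map_poly_le)
          ultimately show ?thesis by simp
        qed
        have dGs: "degree Gs = degree (pderiv F)"
        proof -
          have "coeff (pderiv F) (degree F - 1) = of_nat (degree F) * lead_coeff F"
            using degF by (simp add: coeff_pderiv)
          hence "coeff Gs (degree F - 1) = of_nat (degree F) * poly (lead_coeff F) s"
            unfolding Gs_def h_def by (simp add: coeff_map_poly)
          hence "coeff Gs (degree F - 1) \<noteq> 0" using lcs degF by simp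
          hence "degree Gs \<ge> degree F - 1" by (rule le_degree)
          moreover have "degree Gs \<le> degree (pderiv F)" unfolding Gs_def by (rule degree_map_poly_le)
          ultimately show ?thesis by (simp add: degree_pderiv)
        qed
        have "resultant Fs Gs = h R" unfolding Fs_def Gs_def R_def
          by (rule h.resultant_map_poly) (fold Fs_def Gs_def, simp_all add: dFs dGs)
        moreover have "resultant Fs Gs = 0"
        proof -
          have "[:-t,1:] dvd Fs" "[:-t,1:] dvd Gs" using e1 e2 unfolding Fs_def Gs_def ev2_def h_def
            by (simp_all add: poly_eq_0_iff_dvd)
          hence "[:-t,1:] dvd gcd Fs Gs" by simp
          moreover have "Fs \<noteq> 0" using dFs degF by auto
          hence "gcd Fs Gs \<noteq> 0" by simp
          ultimately have "degree [:-t,1:] \<le> degree (gcd Fs Gs)" by (rule dvd_imp_degree_le)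
          thus ?thesis using resultant_0_gcd[of Fs Gs] by simp
        qed
        ultimately have "poly R s = 0" unfolding h_def by simp
        thus ?thesis using e1 unfolding S0_def by auto
      qed
    qed
    have "finite (\<Union>s\<in>S0. {s} \<times> {t. ev2 F s t = 0})"
    proof (rule finite_UN_I[OF fS0])
      fix s
      obtain t' where "ev2 F s t' \<noteq> 0" using H2 by blast
      hence "map_poly (\<lambda>c. poly c s) F \<noteq> 0" unfolding ev2_def by auto
      hence "finite {t. ev2 F s t = 0}" unfolding ev2_def by (rule poly_roots_finite)
      thus "finite ({s} \<times> {t. ev2 F s t = 0})" by simp
    qed
    thus ?thesis using sub finite_subset by blast
  qed
qed

abbreviation ee :: "nat \<Rightarrow> (nat \<Rightarrow>\<^sub>0 nat)" where "ee i \<equiv> Poly_Mapping.single i 1"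

definition mono :: "(nat \<Rightarrow>\<^sub>0 nat) \<Rightarrow> (nat \<Rightarrow> complex) \<Rightarrow> complex" where
  "mono m x = (\<Prod>j \<in> Poly_Mapping.keys m. x j ^ Poly_Mapping.lookup m j)"

lemma mono_superset:
  "finite B \<Longrightarrow> Poly_Mapping.keys m \<subseteq> B \<Longrightarrow> mono m x = (\<Prod>j\<in>B. x j ^ Poly_Mapping.lookup m j)"
  unfolding mono_def by (rule prod.mono_neutral_left) (auto simp: in_keys_iff)

lemma mono_add: "mono (m + n) x = mono m x * mono n x"
proof -
  let ?B = "Poly_Mapping.keys m \<union> Poly_Mapping.keys n"
  have "mono (m + n) x = (\<Prod>j\<in>?B. x j ^ Poly_Mapping.lookup (m + n) j)"
    by (rule mono_superset) (auto dest: subsetD[OF keys_add])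
  also have "\<dots> = (\<Prod>j\<in>?B. x j ^ Poly_Mapping.lookup m j * x j ^ Poly_Mapping.lookup n j)"
    by (simp add: lookup_add power_add)
  also have "\<dots> = (\<Prod>j\<in>?B. x j ^ Poly_Mapping.lookup m j) * (\<Prod>j\<in>?B. x j ^ Poly_Mapping.lookup n j)"
    by (rule prod.distrib)
  also have "\<dots> = mono m x * mono n x"
    by (subst (1 2) mono_superset[of ?B]) auto
  finally show ?thesis .
qed

lemma mono_zero[simp]: "mono 0 x = 1" unfolding mono_def by simp

lemma mono_single: "mono (Poly_Mapping.single i k) x = x i ^ k"
  unfolding mono_def by (cases "k = 0") auto

lemma eval_mono: "eval p x = (\<Sum>m\<in>Poly_Mapping.keys p. Poly_Mapping.lookup p m * mono m x)"
  unfolding eval_def mono_def ..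

lemma eval_superset:
  "finite A \<Longrightarrow> Poly_Mapping.keys p \<subseteq> A \<Longrightarrow> eval p x = (\<Sum>m\<in>A. Poly_Mapping.lookup p m * mono m x)"
  unfolding eval_mono by (rule sum.mono_neutral_left) (auto simp: in_keys_iff)

lemma eval_add: "eval (p + q) x = eval p x + eval q x"
proof -
  let ?A = "Poly_Mapping.keys p \<union> Poly_Mapping.keys q"
  have "eval (p + q) x = (\<Sum>m\<in>?A. Poly_Mapping.lookup (p + q) m * mono m x)"
    by (rule eval_superset) (auto dest: subsetD[OF keys_add])
  also have "\<dots> = (\<Sum>m\<in>?A. Poly_Mapping.lookup p m * mono m x) + (\<Sum>m\<in>?A. Poly_Mapping.lookup q m * mono m x)"
    by (simp add: lookup_add distrib_right sum.distrib)
  also have "\<dots> = eval p x + eval q x"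
    by (subst (1 2) eval_superset[of ?A]) auto
  finally show ?thesis .
qed

lemma eval_zero[simp]: "eval 0 x = 0" unfolding eval_def by simp

lemma eval_single: "eval (Poly_Mapping.single m c) x = c * mono m x"
  unfolding eval_mono by (cases "c = 0") auto

lemma eval_sum: "eval (sum F I) x = (\<Sum>i\<in>I. eval (F i) x)"
  by (induction I rule: infinite_finite_induct) (auto simp: eval_add)

lemma pm_expand: "p = (\<Sum>k\<in>Poly_Mapping.keys p. Poly_Mapping.single k (Poly_Mapping.lookup p k))"
proof (rule poly_mapping_eqI)
  fix m
  show "Poly_Mapping.lookup p m = Poly_Mapping.lookup (\<Sum>k\<in>Poly_Mapping.keys p. Poly_Mapping.single k (Poly_Mapping.lookup p k)) m"
    unfolding lookup_sum lookup_single
    by (cases "m \<in> Poly_Mapping.keys p") (auto simp: when_def in_keys_iff)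
qed

lemma eval_mult: "eval (p * q) x = eval p x * eval q x"
proof -
  let ?P = "Poly_Mapping.keys p" and ?Q = "Poly_Mapping.keys q"
  let ?c = "Poly_Mapping.lookup p" and ?d = "Poly_Mapping.lookup q"
  have "p * q = (\<Sum>k\<in>?P. Poly_Mapping.single k (?c k)) * (\<Sum>l\<in>?Q. Poly_Mapping.single l (?d l))"
    by (subst (1) pm_expand, subst (1) pm_expand[of q]) rule
  also have "\<dots> = (\<Sum>k\<in>?P. \<Sum>l\<in>?Q. Poly_Mapping.single (k + l) (?c k * ?d l))"
    by (simp add: sum_distrib_left sum_distrib_right mult_single) (rule sum.swap)
  finally have "eval (p * q) x = (\<Sum>k\<in>?P. \<Sum>l\<in>?Q. ?c k * ?d l * (mono k x * mono l x))"
    by (simp add: eval_sum eval_single mono_add)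
  also have "\<dots> = (\<Sum>k\<in>?P. ?c k * mono k x) * (\<Sum>l\<in>?Q. ?d l * mono l x)"
    by (simp add: sum_product mult_ac)
  finally show ?thesis by (simp add: eval_mono)
qed

lemma eval_var: "eval (var i) x = x i"
  unfolding var_def eval_single mono_single by simp

lemma eval_pow: "eval (p ^ k) x = eval p x ^ k"
  by (induction k) (auto simp: eval_mult eval_single simp flip: single_one)

lemma eval_logder: "eval (logder i f) x = x i * eval (Defs.pderiv i f) x"
  unfolding logder_def eval_mult eval_var ..

lemma pm_minus_add: "Poly_Mapping.lookup m i \<ge> 1 \<Longrightarrow> (m - ee i) + ee i = m"
  by (rule poly_mapping_eqI) (auto simp: lookup_add lookup_minus lookup_single when_def)

lemma pm_add_minus: "(m + ee i) - ee i = m"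
  by (rule poly_mapping_eqI) (auto simp: lookup_add lookup_minus lookup_single when_def)

lemma lookup_pderiv:
  "Poly_Mapping.lookup (Defs.pderiv i p) m = of_nat (Poly_Mapping.lookup m i + 1) * Poly_Mapping.lookup p (m + ee i)"
proof -
  have "finite {m. of_nat (Poly_Mapping.lookup m i + 1) * Poly_Mapping.lookup p (m + ee i) \<noteq> (0::complex)}"
  proof (rule finite_subset)
    show "{m. of_nat (Poly_Mapping.lookup m i + 1) * Poly_Mapping.lookup p (m + ee i) \<noteq> (0::complex)}
       \<subseteq> (\<lambda>k. k - ee i) ` Poly_Mapping.keys p"
    proof
      fix m assume "m \<in> {m. of_nat (Poly_Mapping.lookup m i + 1) * Poly_Mapping.lookup p (m + ee i) \<noteq> (0::complex)}"
      hence "m + ee i \<in> Poly_Mapping.keys p" by (auto simp: in_keys_iff)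
      moreover have "m = (m + ee i) - ee i" by (simp add: pm_add_minus)
      ultimately show "m \<in> (\<lambda>k. k - ee i) ` Poly_Mapping.keys p" by blast
    qed
  qed simp
  thus ?thesis unfolding Defs.pderiv_def by (simp add: Abs_poly_mapping_inverse)
qed

lemma keys_pderiv: "m \<in> Poly_Mapping.keys (Defs.pderiv i p) \<Longrightarrow> m + ee i \<in> Poly_Mapping.keys p"
  by (auto simp: in_keys_iff lookup_pderiv)

lemma eval_pderiv:
  "eval (Defs.pderiv i p) x = (\<Sum>m\<in>Poly_Mapping.keys p.
      Poly_Mapping.lookup p m * of_nat (Poly_Mapping.lookup m i) * mono (m - ee i) x)"
proof -
  let ?K = "{m \<in> Poly_Mapping.keys p. Poly_Mapping.lookup m i \<ge> 1}"
  have inj: "inj_on (\<lambda>m. m - ee i) ?K"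
    by (rule inj_onI) (metis (no_types, lifting) mem_Collect_eq pm_minus_add)
  have sub: "Poly_Mapping.keys (Defs.pderiv i p) \<subseteq> (\<lambda>m. m - ee i) ` ?K"
  proof
    fix m assume "m \<in> Poly_Mapping.keys (Defs.pderiv i p)"
    hence "m + ee i \<in> Poly_Mapping.keys p" by (rule keys_pderiv)
    moreover have "Poly_Mapping.lookup (m + ee i) i \<ge> 1" by (simp add: lookup_add)
    moreover have "m = (m + ee i) - ee i" by (simp add: pm_add_minus)
    ultimately show "m \<in> (\<lambda>m. m - ee i) ` ?K" by blast
  qed
  have "eval (Defs.pderiv i p) x = (\<Sum>m\<in>(\<lambda>m. m - ee i) ` ?K. Poly_Mapping.lookup (Defs.pderiv i p) m * mono m x)"
    by (rule eval_superset[OF _ sub]) simp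
  also have "\<dots> = (\<Sum>m\<in>?K. Poly_Mapping.lookup (Defs.pderiv i p) (m - ee i) * mono (m - ee i) x)"
    by (rule sum.reindex[OF inj, unfolded comp_def])
  also have "\<dots> = (\<Sum>m\<in>?K. Poly_Mapping.lookup p m * of_nat (Poly_Mapping.lookup m i) * mono (m - ee i) x)"
  proof (rule sum.cong[OF refl])
    fix m assume "m \<in> ?K"
    hence "Poly_Mapping.lookup m i \<ge> 1" by simp
    thus "Poly_Mapping.lookup (Defs.pderiv i p) (m - ee i) * mono (m - ee i) x =
        Poly_Mapping.lookup p m * of_nat (Poly_Mapping.lookup m i) * mono (m - ee i) x"
      using pm_minus_add[of m i] by (simp add: lookup_pderiv lookup_minus)
  qed
  also have "\<dots> = (\<Sum>m\<in>Poly_Mapping.keys p. Poly_Mapping.lookup p m * of_nat (Poly_Mapping.lookup m i) * mono (m - ee i) x)"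
    by (rule sum.mono_neutral_left) auto
  finally show ?thesis .
qed

lemma mono_minus: "Poly_Mapping.lookup m i \<ge> 1 \<Longrightarrow> mono m x = x i * mono (m - ee i) x"
  by (metis mono_add mono_single mult.commute pm_minus_add power_one_right)

lemma xi_eval_pderiv:
  "x i * eval (Defs.pderiv i p) x = (\<Sum>m\<in>Poly_Mapping.keys p.
      Poly_Mapping.lookup p m * of_nat (Poly_Mapping.lookup m i) * mono m x)"
  unfolding eval_pderiv sum_distrib_left
proof (rule sum.cong[OF refl])
  fix m
  show "x i * (Poly_Mapping.lookup p m * of_nat (Poly_Mapping.lookup m i) * mono (m - ee i) x) =
        Poly_Mapping.lookup p m * of_nat (Poly_Mapping.lookup m i) * mono m x"
    by (cases "Poly_Mapping.lookup m i \<ge> 1") (auto simp: mono_minus)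
qed

lemma eval_logder_sum:
  "eval (logder i p) x = (\<Sum>m\<in>Poly_Mapping.keys p.
      Poly_Mapping.lookup p m * of_nat (Poly_Mapping.lookup m i) * mono m x)"
  unfolding eval_logder xi_eval_pderiv ..

lemma euler_a:
  assumes "in_S_deg r a b p"
  shows "of_nat a * eval p x = eval (logder 1 p) x + eval (logder 3 p) x + of_nat r * eval (logder 4 p) x"
proof -
  have "eval (logder 1 p) x + eval (logder 3 p) x + of_nat r * eval (logder 4 p) x =
    (\<Sum>m\<in>Poly_Mapping.keys p. Poly_Mapping.lookup p m * of_nat (Poly_Mapping.lookup m 1 + Poly_Mapping.lookup m 3 + r * Poly_Mapping.lookup m 4) * mono m x)"
    unfolding eval_logder_sum sum_distrib_left sum.distrib[symmetric]
    by (rule sum.cong) (auto simp: algebra_simps)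
  also have "\<dots> = (\<Sum>m\<in>Poly_Mapping.keys p. of_nat a * (Poly_Mapping.lookup p m * mono m x))"
  proof (rule sum.cong[OF refl])
    fix m assume "m \<in> Poly_Mapping.keys p"
    with assms have "mon_deg r m = (a, b)" unfolding in_S_deg_def by blast
    hence "Poly_Mapping.lookup m 1 + Poly_Mapping.lookup m 3 + r * Poly_Mapping.lookup m 4 = a"
      unfolding mon_deg_def by simp
    thus "Poly_Mapping.lookup p m * of_nat (Poly_Mapping.lookup m 1 + Poly_Mapping.lookup m 3 + r * Poly_Mapping.lookup m 4) * mono m x =
       of_nat a * (Poly_Mapping.lookup p m * mono m x)" by simp
  qed
  finally show ?thesis by (simp add: eval_mono sum_distrib_left)
qed

lemma euler_b:
  assumes "in_S_deg r a b p"
  shows "of_nat b * eval p x = eval (logder 2 p) x + eval (logder 4 p) x"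
proof -
  have "eval (logder 2 p) x + eval (logder 4 p) x =
    (\<Sum>m\<in>Poly_Mapping.keys p. Poly_Mapping.lookup p m * of_nat (Poly_Mapping.lookup m 2 + Poly_Mapping.lookup m 4) * mono m x)"
    unfolding eval_logder_sum sum.distrib[symmetric]
    by (rule sum.cong) (auto simp: algebra_simps)
  also have "\<dots> = (\<Sum>m\<in>Poly_Mapping.keys p. of_nat b * (Poly_Mapping.lookup p m * mono m x))"
  proof (rule sum.cong[OF refl])
    fix m assume "m \<in> Poly_Mapping.keys p"
    with assms have "mon_deg r m = (a, b)" unfolding in_S_deg_def by blast
    hence "Poly_Mapping.lookup m 2 + Poly_Mapping.lookup m 4 = b"
      unfolding mon_deg_def by simp
    thus "Poly_Mapping.lookup p m * of_nat (Poly_Mapping.lookup m 2 + Poly_Mapping.lookup m 4) * mono m x =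
       of_nat b * (Poly_Mapping.lookup p m * mono m x)" by simp
  qed
  finally show ?thesis by (simp add: eval_mono sum_distrib_left)
qed

lemma mon_deg_add: "mon_deg r (m + n) = (fst (mon_deg r m) + fst (mon_deg r n), snd (mon_deg r m) + snd (mon_deg r n))"
  unfolding mon_deg_def by (simp add: lookup_add algebra_simps)

lemma keys_add_sub: "Poly_Mapping.keys (k + l) \<subseteq> Poly_Mapping.keys k \<union> Poly_Mapping.keys (l::nat \<Rightarrow>\<^sub>0 nat)"
  by (rule keys_add)

lemma in_S_deg_mult:
  assumes "in_S_deg r a1 b1 p" "in_S_deg r a2 b2 q"
  shows "in_S_deg r (a1 + a2) (b1 + b2) (p * q)"
  unfolding in_S_deg_def in_S_def
proof (intro conjI ballI)
  fix m assume "m \<in> Poly_Mapping.keys (p * q)"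
  then obtain k l where kl: "m = k + l" "k \<in> Poly_Mapping.keys p" "l \<in> Poly_Mapping.keys q"
    using keys_mult by blast
  from kl assms show "Poly_Mapping.keys m \<subseteq> {1, 2, 3, 4}"
    unfolding in_S_deg_def in_S_def using keys_add_sub[of k l] by blast
  from kl assms show "mon_deg r m = (a1 + a2, b1 + b2)"
    unfolding in_S_deg_def by (simp add: mon_deg_add)
qed

lemma in_S_mult:
  assumes "in_S p" "in_S q"
  shows "in_S (p * q)"
  unfolding in_S_def
proof
  fix m assume "m \<in> Poly_Mapping.keys (p * q)"
  then obtain k l where kl: "m = k + l" "k \<in> Poly_Mapping.keys p" "l \<in> Poly_Mapping.keys q"
    using keys_mult by blast
  from kl assms show "Poly_Mapping.keys m \<subseteq> {1, 2, 3, 4}"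
    unfolding in_S_def using keys_add_sub[of k l] by blast
qed

lemma in_S_zero[simp]: "in_S 0" unfolding in_S_def by simp
lemma in_S_deg_zero[simp]: "in_S_deg r a b 0" unfolding in_S_deg_def by simp

lemma keys_var: "Poly_Mapping.keys (var i) = {ee i}" unfolding var_def by simp

lemma in_S_var: "i \<in> {1,2,3,4} \<Longrightarrow> in_S (var i)"
  unfolding in_S_def keys_var by auto

lemma in_S_deg_var1: "in_S_deg r 1 0 (var 1)"
  unfolding in_S_deg_def in_S_def keys_var by (auto simp: mon_deg_def lookup_single)
lemma in_S_deg_var2: "in_S_deg r 0 1 (var 2)"
  unfolding in_S_deg_def in_S_def keys_var by (auto simp: mon_deg_def lookup_single)
lemma in_S_deg_var3: "in_S_deg r 1 0 (var 3)"
  unfolding in_S_deg_def in_S_def keys_var by (auto simp: mon_deg_def lookup_single)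
lemma in_S_deg_var4: "in_S_deg r r 1 (var 4)"
  unfolding in_S_deg_def in_S_def keys_var by (auto simp: mon_deg_def lookup_single)

lemma in_S_deg_one: "in_S_deg r 0 0 1"
  unfolding in_S_deg_def in_S_def by (auto simp: mon_deg_def)

lemma in_S_deg_pow: "in_S_deg r a b p \<Longrightarrow> in_S_deg r (k * a) (k * b) (p ^ k)"
proof (induction k)
  case 0 thus ?case by (simp add: in_S_deg_one)
next
  case (Suc k)
  hence "in_S_deg r (a + k * a) (b + k * b) (p * p ^ k)" by (intro in_S_deg_mult) auto
  thus ?case by simp
qed

lemma in_S_deg_in_S: "in_S_deg r a b p \<Longrightarrow> in_S p" unfolding in_S_deg_def by simp

lemma in_S_deg_pderiv:
  assumes "in_S_deg r a b p"
  shows "in_S_deg r (a - fst (mon_deg r (ee i))) (b - snd (mon_deg r (ee i))) (Defs.pderiv i p)"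
  unfolding in_S_deg_def in_S_def
proof (intro conjI ballI)
  fix m assume "m \<in> Poly_Mapping.keys (Defs.pderiv i p)"
  hence m1: "m + ee i \<in> Poly_Mapping.keys p" by (rule keys_pderiv)
  have "Poly_Mapping.keys m \<subseteq> Poly_Mapping.keys (m + ee i)"
    by (auto simp: in_keys_iff lookup_add)
  with m1 assms show "Poly_Mapping.keys m \<subseteq> {1, 2, 3, 4}" unfolding in_S_deg_def in_S_def by blast
  from m1 assms have "mon_deg r (m + ee i) = (a, b)" unfolding in_S_deg_def by blast
  thus "mon_deg r m = (a - fst (mon_deg r (ee i)), b - snd (mon_deg r (ee i)))"
    unfolding mon_deg_add by auto
qed

lemma mon_deg_e1: "mon_deg r (ee 1) = (1, 0)" by (simp add: mon_deg_def lookup_single)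
lemma mon_deg_e2: "mon_deg r (ee 2) = (0, 1)" by (simp add: mon_deg_def lookup_single)
lemma mon_deg_e3: "mon_deg r (ee 3) = (1, 0)" by (simp add: mon_deg_def lookup_single)
lemma mon_deg_e4: "mon_deg r (ee 4) = (r, 1)" by (simp add: mon_deg_def lookup_single)

definition scale :: "nat \<Rightarrow> complex \<Rightarrow> complex \<Rightarrow> (nat \<Rightarrow> complex) \<Rightarrow> (nat \<Rightarrow> complex)" where
  "scale r l u x = x(1 := l * x 1, 2 := u * x 2, 3 := l * x 3, 4 := l ^ r * u * x 4)"

lemma mono_S: "Poly_Mapping.keys m \<subseteq> {1,2,3,4} \<Longrightarrow>
  mono m x = x 1 ^ Poly_Mapping.lookup m 1 * x 2 ^ Poly_Mapping.lookup m 2 * x 3 ^ Poly_Mapping.lookup m 3 * x 4 ^ Poly_Mapping.lookup m 4"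
  by (subst mono_superset[of "{1,2,3,4}"]) auto

lemma eval_scale:
  assumes "in_S_deg r a b p"
  shows "eval p (scale r l u x) = l ^ a * u ^ b * eval p x"
  unfolding eval_mono sum_distrib_left
proof (rule sum.cong[OF refl])
  fix m assume m: "m \<in> Poly_Mapping.keys p"
  with assms have ks: "Poly_Mapping.keys m \<subseteq> {1,2,3,4}" and md: "mon_deg r m = (a, b)"
    unfolding in_S_deg_def in_S_def by auto
  from md have a: "a = Poly_Mapping.lookup m 1 + Poly_Mapping.lookup m 3 + r * Poly_Mapping.lookup m 4"
    and b: "b = Poly_Mapping.lookup m 2 + Poly_Mapping.lookup m 4" unfolding mon_deg_def by auto
  have "mono m (scale r l u x) = l ^ a * u ^ b * mono m x"
    unfolding mono_S[OF ks] a b scale_def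
    by (simp add: power_mult_distrib power_add power_mult mult_ac)
  thus "Poly_Mapping.lookup p m * mono m (scale r l u x) = l ^ a * u ^ b * (Poly_Mapping.lookup p m * mono m x)"
    by simp
qed

lemma eval_cong_S:
  assumes "in_S p" "\<And>j. j \<in> {1,2,3,4} \<Longrightarrow> x j = y j"
  shows "eval p x = eval p y"
  unfolding eval_mono
proof (rule sum.cong[OF refl])
  fix m assume "m \<in> Poly_Mapping.keys p"
  with assms(1) have ks: "Poly_Mapping.keys m \<subseteq> {1,2,3,4}" unfolding in_S_def by auto
  show "Poly_Mapping.lookup p m * mono m x = Poly_Mapping.lookup p m * mono m y"
    unfolding mono_S[OF ks] using assms(2) by simp
qed

lemma hr_equiv_scale:
  assumes "hr_equiv r x y"
  obtains l u where "l \<noteq> 0" "u \<noteq> 0" "\<And>j. j \<in> {1,2,3,4} \<Longrightarrow> y j = scale r l u x j"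
proof -
  from assms obtain l u where lu: "l \<noteq> 0" "u \<noteq> 0" "y 1 = l * x 1" "y 2 = u * x 2" "y 3 = l * x 3"
    "y 4 = l ^ r * u * x 4" unfolding hr_equiv_def by blast
  show thesis by (rule that[of l u]) (use lu in \<open>auto simp: scale_def\<close>)
qed

lemma hr_equiv_eval:
  assumes "hr_equiv r x y" "in_S_deg r a b p"
  shows "\<exists>l u. l \<noteq> 0 \<and> u \<noteq> 0 \<and> eval p y = l ^ a * u ^ b * eval p x"
proof -
  obtain l u where lu: "l \<noteq> 0" "u \<noteq> 0" "\<And>j. j \<in> {1,2,3,4} \<Longrightarrow> y j = scale r l u x j"
    using hr_equiv_scale[OF assms(1)] by blast
  have "eval p y = eval p (scale r l u x)"
    by (rule eval_cong_S[OF in_S_deg_in_S[OF assms(2)]]) (simp add: lu(3))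
  also have "\<dots> = l ^ a * u ^ b * eval p x" by (rule eval_scale[OF assms(2)])
  finally show ?thesis using lu by blast
qed

lemma hr_equiv_zero_iff:
  assumes "hr_equiv r x y" "in_S_deg r a b p"
  shows "eval p y = 0 \<longleftrightarrow> eval p x = 0"
  using hr_equiv_eval[OF assms] by auto

definition KK :: "nat \<Rightarrow> (nat \<Rightarrow>\<^sub>0 nat) \<Rightarrow> (nat \<Rightarrow> complex) \<Rightarrow> complex" where
  "KK i m x = (\<Prod>j\<in>Poly_Mapping.keys m - {i}. x j ^ Poly_Mapping.lookup m j)"

lemma mono_upd: "mono m (x(i := t)) = t ^ Poly_Mapping.lookup m i * KK i m x"
proof -
  have "mono m (x(i := t)) = (\<Prod>j\<in>insert i (Poly_Mapping.keys m). (x(i := t)) j ^ Poly_Mapping.lookup m j)"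
    by (rule mono_superset) auto
  also have "\<dots> = t ^ Poly_Mapping.lookup m i * (\<Prod>j\<in>Poly_Mapping.keys m - {i}. (x(i := t)) j ^ Poly_Mapping.lookup m j)"
    by (subst prod.insert_remove) auto
  also have "(\<Prod>j\<in>Poly_Mapping.keys m - {i}. (x(i := t)) j ^ Poly_Mapping.lookup m j) = KK i m x"
    unfolding KK_def by (rule prod.cong) auto
  finally show ?thesis .
qed

lemma KK_minus: "KK i (m - ee i) x = KK i m x"
proof -
  have "Poly_Mapping.keys (m - ee i) - {i} = Poly_Mapping.keys m - {i}"
    by (auto simp: in_keys_iff lookup_minus lookup_single when_def)
  thus ?thesis unfolding KK_def
    by (intro prod.cong) (auto simp: lookup_minus lookup_single when_def)
qed

lemma deriv_line:
  "((\<lambda>t. eval p (x(i := t))) has_field_derivative eval (Defs.pderiv i p) (x(i := t))) (at t)"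
proof -
  let ?c = "Poly_Mapping.lookup p" and ?k = "\<lambda>m. Poly_Mapping.lookup m i"
  have e1: "\<And>t. eval p (x(i := t)) = (\<Sum>m\<in>Poly_Mapping.keys p. ?c m * (t ^ ?k m * KK i m x))"
    unfolding eval_mono mono_upd ..
  have e2: "eval (Defs.pderiv i p) (x(i := t)) = (\<Sum>m\<in>Poly_Mapping.keys p. ?c m * (of_nat (?k m) * t ^ (?k m - 1) * KK i m x))"
    unfolding eval_pderiv
  proof (rule sum.cong[OF refl])
    fix m
    show "?c m * of_nat (?k m) * mono (m - ee i) (x(i := t)) = ?c m * (of_nat (?k m) * t ^ (?k m - 1) * KK i m x)"
      using KK_minus[of i m x] by (cases "?k m = 0") (auto simp: mono_upd lookup_minus)
  qed
  show ?thesis unfolding e1 e2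
    apply (rule DERIV_sum)
    apply (rule DERIV_cmult)
    apply (rule DERIV_cmult_right)
    using DERIV_power[OF DERIV_ident] by simp
qed

lemma tendsto_line: "((\<lambda>w. eval p (x(i := w))) \<longlongrightarrow> eval p (x(i := t))) (at t)"
  using DERIV_isCont[OF deriv_line] by (rule isContD)

definition mm :: mpoly where "mm = var 1 * var 2 * var 3 * var 4"

lemma in_S_mm: "in_S mm" unfolding mm_def by (intro in_S_mult in_S_var) auto

lemma J0_single:
  assumes "in_S h" "k \<in> {1,2,3,4}"
  shows "h * logder k f \<in> J0 f"
  unfolding J0_def
proof (intro CollectI exI conjI allI)
  let ?h = "\<lambda>j. if j = k then h else 0"
  fix i show "in_S (?h i)" using assms by auto
next
  let ?h = "\<lambda>j. if j = k then h else 0"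
  have "(\<Sum>i\<in>{1,2,3,4}. ?h i * logder i f) = ?h 1 * logder 1 f + ?h 2 * logder 2 f + ?h 3 * logder 3 f + ?h 4 * logder 4 f"
    by (simp add: add.assoc)
  also have "\<dots> = h * logder k f" using assms(2) by auto
  finally show "h * logder k f = (\<Sum>i\<in>{1,2,3,4}. ?h i * logder i f)" by simp
qed

lemma J1_mem:
  assumes "in_S_deg r a b g" "mm * g = h * logder k f" "in_S h" "k \<in> {1,2,3,4}"
  shows "g \<in> J1_deg r a b f"
  unfolding J1_deg_def J1_def
  using assms J0_single[OF assms(3,4), of f] in_S_deg_in_S[OF assms(1)]
  by (auto simp: mm_def)

context
  fixes r a b :: nat and f :: mpoly
  assumes ab: "a > r * b" "b > 0" and fdeg: "in_S_deg r a b f"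
begin

lemma a_ge: "a \<ge> r" "a \<ge> 1"
proof -
  have "r * 1 \<le> r * b" using ab(2) by (intro mult_le_mono2) simp
  hence "r * b \<ge> r" by simp
  thus "a \<ge> r" using ab(1) by linarith
  show "a \<ge> 1" using ab(1) by linarith
qed

lemma deg_p1: "in_S_deg r (a - 1) b (Defs.pderiv 1 f)"
  using in_S_deg_pderiv[OF fdeg, of 1] by (simp add: mon_deg_e1[simplified])
lemma deg_p2: "in_S_deg r a (b - 1) (Defs.pderiv 2 f)"
  using in_S_deg_pderiv[OF fdeg, of 2] by (simp add: mon_deg_e2[simplified])
lemma deg_p3: "in_S_deg r (a - 1) b (Defs.pderiv 3 f)"
  using in_S_deg_pderiv[OF fdeg, of 3] by (simp add: mon_deg_e3[simplified])
lemma deg_p4: "in_S_deg r (a - r) (b - 1) (Defs.pderiv 4 f)"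
  using in_S_deg_pderiv[OF fdeg, of 4] by (simp add: mon_deg_e4[simplified])

lemma deg_sec: 
  assumes "in_S_deg r a1 b1 q" "in_S_deg r a2 b2 p" "a1 + a2 = a" "b1 + b2 = b"
  shows "in_S_deg r a b (q * p)"
  using in_S_deg_mult[OF assms(1,2)] assms(3,4) by simp

lemma logder_J1: "i \<in> {1,2,3,4} \<Longrightarrow> logder i f \<in> J1_deg r a b f"
proof -
  assume i: "i \<in> {1,2,3,4}"
  have d1: "in_S_deg r a b (logder 1 f)" unfolding logder_def
    by (rule deg_sec[OF in_S_deg_var1 deg_p1]) (use a_ge in auto)
  have d2: "in_S_deg r a b (logder 2 f)" unfolding logder_def
    by (rule deg_sec[OF in_S_deg_var2 deg_p2]) (use ab(2) in auto)
  have d3: "in_S_deg r a b (logder 3 f)" unfolding logder_def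
    by (rule deg_sec[OF in_S_deg_var3 deg_p3]) (use a_ge in auto)
  have d4: "in_S_deg r a b (logder 4 f)" unfolding logder_def
    by (rule deg_sec[OF in_S_deg_var4 deg_p4]) (use a_ge ab(2) in auto)
  have "in_S_deg r a b (logder i f)" using i d1 d2 d3 d4 by auto
  moreover have "mm * logder i f = mm * logder i f" ..
  ultimately show ?thesis using J1_mem[OF _ _ in_S_mm i] by blast
qed

lemma sec31: "var 3 * Defs.pderiv 1 f \<in> J1_deg r a b f"
proof (rule J1_mem[where k=1 and h="var 2 * var 3 * var 4 * var 3"])
  show "in_S_deg r a b (var 3 * Defs.pderiv 1 f)"
    using a_ge by (intro deg_sec[OF in_S_deg_var3 deg_p1]) auto
  show "mm * (var 3 * Defs.pderiv 1 f) = var 2 * var 3 * var 4 * var 3 * logder 1 f"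
    unfolding mm_def logder_def by (simp add: mult_ac)
  show "in_S (var 2 * var 3 * var 4 * var 3)" by (intro in_S_mult in_S_var) auto
qed simp

lemma sec13: "var 1 * Defs.pderiv 3 f \<in> J1_deg r a b f"
proof (rule J1_mem[where k=3 and h="var 1 * var 2 * var 4 * var 1"])
  show "in_S_deg r a b (var 1 * Defs.pderiv 3 f)"
    using a_ge by (intro deg_sec[OF in_S_deg_var1 deg_p3]) auto
  show "mm * (var 1 * Defs.pderiv 3 f) = var 1 * var 2 * var 4 * var 1 * logder 3 f"
    unfolding mm_def logder_def by (simp add: mult_ac)
  show "in_S (var 1 * var 2 * var 4 * var 1)" by (intro in_S_mult in_S_var) auto
qed simp

lemma in_S_deg_var1_pow: "in_S_deg r r 0 (var 1 ^ r)"
  using in_S_deg_pow[OF in_S_deg_var1, of r r] by simp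
lemma in_S_deg_var3_pow: "in_S_deg r r 0 (var 3 ^ r)"
  using in_S_deg_pow[OF in_S_deg_var3, of r r] by simp

lemma in_S_var_pow: "i \<in> {1,2,3,4} \<Longrightarrow> in_S (var i ^ k)"
proof (induction k)
  case 0 then show ?case using in_S_deg_in_S[OF in_S_deg_one] by simp
next
  case (Suc k) then show ?case using in_S_mult[OF in_S_var[OF Suc.prems] Suc.IH[OF Suc.prems]] by simp
qed

lemma secA: "var 2 * var 1 ^ r * Defs.pderiv 4 f \<in> J1_deg r a b f"
proof (rule J1_mem[where k=4 and h="var 1 * var 2 * var 3 * var 2 * var 1 ^ r"])
  show "in_S_deg r a b (var 2 * var 1 ^ r * Defs.pderiv 4 f)"
    using a_ge ab(2) by (intro deg_sec[OF in_S_deg_mult[OF in_S_deg_var2 in_S_deg_var1_pow] deg_p4]) auto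
  show "mm * (var 2 * var 1 ^ r * Defs.pderiv 4 f) = var 1 * var 2 * var 3 * var 2 * var 1 ^ r * logder 4 f"
    unfolding mm_def logder_def by (simp add: mult_ac)
  show "in_S (var 1 * var 2 * var 3 * var 2 * var 1 ^ r)" by (intro in_S_mult in_S_var in_S_var_pow) auto
qed simp

lemma secB: "var 2 * var 3 ^ r * Defs.pderiv 4 f \<in> J1_deg r a b f"
proof (rule J1_mem[where k=4 and h="var 1 * var 2 * var 3 * var 2 * var 3 ^ r"])
  show "in_S_deg r a b (var 2 * var 3 ^ r * Defs.pderiv 4 f)"
    using a_ge ab(2) by (intro deg_sec[OF in_S_deg_mult[OF in_S_deg_var2 in_S_deg_var3_pow] deg_p4]) auto
  show "mm * (var 2 * var 3 ^ r * Defs.pderiv 4 f) = var 1 * var 2 * var 3 * var 2 * var 3 ^ r * logder 4 f"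
    unfolding mm_def logder_def by (simp add: mult_ac)
  show "in_S (var 1 * var 2 * var 3 * var 2 * var 3 ^ r)" by (intro in_S_mult in_S_var in_S_var_pow) auto
qed simp

end

definition pt :: "complex \<Rightarrow> complex \<Rightarrow> complex \<Rightarrow> complex \<Rightarrow> nat \<Rightarrow> complex" where
  "pt s1 s2 s3 s4 = (\<lambda>j. if j = 1 then s1 else if j = 2 then s2 else if j = 3 then s3 else if j = 4 then s4 else 0)"

lemma pt_simps[simp]: "pt s1 s2 s3 s4 1 = s1" "pt s1 s2 s3 s4 2 = s2" "pt s1 s2 s3 s4 3 = s3" "pt s1 s2 s3 s4 4 = s4"
  by (auto simp: pt_def)

lemma pt_simp1[simp]: "pt s1 s2 s3 s4 (Suc 0) = s1" by (simp add: pt_def)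

lemma pt_upd1'[simp]: "(pt s1 s2 s3 s4)(Suc 0 := t) = pt t s2 s3 s4" by (auto simp: pt_def)

lemma pt_upd: "(pt s1 s2 s3 s4)(1 := t) = pt t s2 s3 s4" "(pt s1 s2 s3 s4)(2 := t) = pt s1 t s3 s4"
   "(pt s1 s2 s3 s4)(3 := t) = pt s1 s2 t s4" "(pt s1 s2 s3 s4)(4 := t) = pt s1 s2 s3 t"
  by (auto simp: pt_def)

lemma in_U_pt: "in_U (pt s1 s2 s3 s4) \<longleftrightarrow> s3 * s4 \<noteq> 0 \<or> s1 * s4 \<noteq> 0 \<or> s1 * s2 \<noteq> 0 \<or> s2 * s3 \<noteq> 0"
  unfolding in_U_def by simp

definition FA :: "mpoly \<Rightarrow> complex poly poly" where
  "FA f = (\<Sum>m\<in>Poly_Mapping.keys f. monom (monom (Poly_Mapping.lookup f m) (Poly_Mapping.lookup m 1)) (Poly_Mapping.lookup m 4))"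
definition FB :: "mpoly \<Rightarrow> complex poly poly" where
  "FB f = (\<Sum>m\<in>Poly_Mapping.keys f. monom (monom (Poly_Mapping.lookup f m) (Poly_Mapping.lookup m 4)) (Poly_Mapping.lookup m 1))"

lemma ev2_zero[simp]: "ev2 0 s t = 0" unfolding ev2_def by simp

lemma ev2_sumF: "ev2 (sum G I) s t = (\<Sum>i\<in>I. ev2 (G i) s t)"
  by (induction I rule: infinite_finite_induct) (auto simp: ev2_add)

lemma ev2_monom2: "ev2 (monom (monom c i) j) s t = c * s ^ i * t ^ j"
  unfolding ev2_def by (simp add: map_poly_monom poly_monom)

lemma ev2_FA: "in_S f \<Longrightarrow> ev2 (FA f) s t = eval f (pt s 1 1 t)"
  unfolding FA_def ev2_sumF ev2_monom2 eval_mono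
proof (rule sum.cong[OF refl])
  fix m assume "in_S f" "m \<in> Poly_Mapping.keys f"
  hence ks: "Poly_Mapping.keys m \<subseteq> {1,2,3,4}" unfolding in_S_def by auto
  show "Poly_Mapping.lookup f m * s ^ Poly_Mapping.lookup m 1 * t ^ Poly_Mapping.lookup m 4 =
        Poly_Mapping.lookup f m * mono m (pt s 1 1 t)"
    unfolding mono_S[OF ks] by simp
qed

lemma ev2_FB: "in_S f \<Longrightarrow> ev2 (FB f) t s = eval f (pt s 1 1 t)"
  unfolding FB_def ev2_sumF ev2_monom2 eval_mono
proof (rule sum.cong[OF refl])
  fix m assume "in_S f" "m \<in> Poly_Mapping.keys f"
  hence ks: "Poly_Mapping.keys m \<subseteq> {1,2,3,4}" unfolding in_S_def by auto
  show "Poly_Mapping.lookup f m * t ^ Poly_Mapping.lookup m 4 * s ^ Poly_Mapping.lookup m 1 =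
        Poly_Mapping.lookup f m * mono m (pt s 1 1 t)"
    unfolding mono_S[OF ks] by (simp add: mult_ac)
qed

lemma ev2_FA_dt: "in_S f \<Longrightarrow> ev2 (pderiv (FA f)) s t = eval (Defs.pderiv 4 f) (pt s 1 1 t)"
proof -
  assume f: "in_S f"
  have e: "(\<lambda>t. ev2 (FA f) s t) = (\<lambda>t. eval f ((pt s 1 1 0)(4 := t)))"
    by (simp add: ev2_FA[OF f] pt_upd)
  have "((\<lambda>t. ev2 (FA f) s t) has_field_derivative eval (Defs.pderiv 4 f) ((pt s 1 1 0)(4 := t))) (at t)"
    unfolding e by (rule deriv_line)
  with ev2_deriv_t show ?thesis by (metis DERIV_unique pt_upd(4))
qed

lemma ev2_FA_ds: "in_S f \<Longrightarrow> ev2 (map_poly pderiv (FA f)) s t = eval (Defs.pderiv 1 f) (pt s 1 1 t)"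
proof -
  assume f: "in_S f"
  have e: "(\<lambda>s. ev2 (FA f) s t) = (\<lambda>s. eval f ((pt 0 1 1 t)(1 := s)))"
    by (simp add: ev2_FA[OF f] pt_upd)
  have "((\<lambda>s. ev2 (FA f) s t) has_field_derivative eval (Defs.pderiv 1 f) ((pt 0 1 1 t)(1 := s))) (at s)"
    unfolding e by (rule deriv_line)
  with ev2_deriv_s show ?thesis by (metis DERIV_unique pt_upd(1))
qed

lemma ev2_FB_dt: "in_S f \<Longrightarrow> ev2 (pderiv (FB f)) t s = eval (Defs.pderiv 1 f) (pt s 1 1 t)"
proof -
  assume f: "in_S f"
  have e: "(\<lambda>s. ev2 (FB f) t s) = (\<lambda>s. eval f ((pt 0 1 1 t)(1 := s)))"
    by (simp add: ev2_FB[OF f] pt_upd)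
  have "((\<lambda>s. ev2 (FB f) t s) has_field_derivative eval (Defs.pderiv 1 f) ((pt 0 1 1 t)(1 := s))) (at s)"
    unfolding e by (rule deriv_line)
  with ev2_deriv_t show ?thesis by (metis DERIV_unique pt_upd(1))
qed

lemma ev2_FB_ds: "in_S f \<Longrightarrow> ev2 (map_poly pderiv (FB f)) t s = eval (Defs.pderiv 4 f) (pt s 1 1 t)"
proof -
  assume f: "in_S f"
  have e: "(\<lambda>t. ev2 (FB f) t s) = (\<lambda>t. eval f ((pt s 1 1 0)(4 := t)))"
    by (simp add: ev2_FB[OF f] pt_upd)
  have "((\<lambda>t. ev2 (FB f) t s) has_field_derivative eval (Defs.pderiv 4 f) ((pt s 1 1 0)(4 := t))) (at t)"
    unfolding e by (rule deriv_line)
  with ev2_deriv_s show ?thesis by (metis DERIV_unique pt_upd(4))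
qed

definition LP :: "nat \<Rightarrow> (nat \<Rightarrow> complex) \<Rightarrow> mpoly \<Rightarrow> complex poly" where
  "LP i x p = (\<Sum>m\<in>Poly_Mapping.keys p. monom (Poly_Mapping.lookup p m * KK i m x) (Poly_Mapping.lookup m i))"

lemma poly_LP: "poly (LP i x p) t = eval p (x(i := t))"
  unfolding LP_def poly_sum poly_monom eval_mono mono_upd
  by (rule sum.cong) (auto simp: mult_ac)

lemma poly_root_or_const: "(\<exists>t. poly (P::complex poly) t = 0) \<or> (\<exists>d. \<forall>t. poly P t = d)"
proof (cases "degree P = 0")
  case True
  then obtain d where "P = [:d:]" by (metis degree_eq_zeroE)
  thus ?thesis by auto
next
  case False
  hence "\<not> (\<exists>a l. a \<noteq> 0 \<and> l = 0 \<and> P = pCons a l)" by auto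
  thus ?thesis using fundamental_theorem_of_algebra_alt by blast
qed

lemma lim0:
  assumes "(g \<longlongrightarrow> L) (at (0::complex))" "\<And>w. w \<noteq> 0 \<Longrightarrow> g w = w ^ k * d" "k \<ge> 1"
  shows "L = 0"
proof -
  have "((\<lambda>w. w ^ k * d) \<longlongrightarrow> 0 ^ k * d) (at (0::complex))" by (intro tendsto_intros)
  moreover have "\<forall>\<^sub>F w in at 0. w ^ k * d = g w"
    unfolding eventually_at_filter by (rule always_eventually) (simp add: assms(2))
  ultimately have "(g \<longlongrightarrow> 0 ^ k * d) (at 0)" by (rule Lim_transform_eventually)
  hence "L = 0 ^ k * d" using assms(1) tendsto_unique[OF at_neq_bot] by blast
  thus ?thesis using assms(3) by simp
qed

context
  fixes r a b :: nat and f :: mpoly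
  assumes ab: "a > r * b" "b > 0" and fdeg: "in_S_deg r a b f" and nd: "nondegenerate f"
begin

lemma fS: "in_S f" using fdeg by (rule in_S_deg_in_S)

lemma no_common: "in_U x \<Longrightarrow> \<forall>i\<in>{1,2,3,4}. eval (logder i f) x = 0 \<Longrightarrow> False"
  using nd unfolding nondegenerate_def by blast

lemma sm1:
  assumes "in_U x" "eval f x = 0" "eval (logder 4 f) x = 0"
    "eval (logder 1 f) x = 0 \<or> eval (logder 3 f) x = 0"
  shows False
proof -
  have ea: "of_nat a * eval f x = eval (logder 1 f) x + eval (logder 3 f) x + of_nat r * eval (logder 4 f) x"
    by (rule euler_a[OF fdeg])
  have eb: "of_nat b * eval f x = eval (logder 2 f) x + eval (logder 4 f) x"
    by (rule euler_b[OF fdeg])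
  have "eval (logder 2 f) x = 0" using eb assms(2,3) by simp
  moreover have "eval (logder 1 f) x = 0" "eval (logder 3 f) x = 0" using ea assms(2,3,4) by auto
  ultimately show False using no_common[OF assms(1)] assms(3) by auto
qed

lemma sm2:
  assumes "in_U x" "eval f x = 0" "eval (logder 2 f) x = 0"
    "eval (logder 1 f) x = 0 \<or> eval (logder 3 f) x = 0"
  shows False
proof -
  have eb: "of_nat b * eval f x = eval (logder 2 f) x + eval (logder 4 f) x"
    by (rule euler_b[OF fdeg])
  have "eval (logder 4 f) x = 0" using eb assms(2,3) by simp
  thus False using sm1 assms by blast
qed

lemma deg_p1': "in_S_deg r (a - 1) b (Defs.pderiv 1 f)" using deg_p1[OF ab fdeg] .
lemma deg_p3': "in_S_deg r (a - 1) b (Defs.pderiv 3 f)" using deg_p3[OF ab fdeg] .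
lemma deg_p4': "in_S_deg r (a - r) (b - 1) (Defs.pderiv 4 f)" using deg_p4[OF ab fdeg] .

lemma zero_deriv_line:
  assumes "\<And>t. eval f (x(i := t)) = 0"
  shows "eval (Defs.pderiv i f) (x(i := t)) = 0"
proof -
  have "((\<lambda>t. eval f (x(i := t))) has_field_derivative 0) (at t)"
    using assms by simp
  thus ?thesis using deriv_line DERIV_unique by blast
qed

lemma H1A: "ev2 (FA f) s t = 0 \<Longrightarrow> ev2 (pderiv (FA f)) s t = 0 \<Longrightarrow> ev2 (map_poly pderiv (FA f)) s t \<noteq> 0"
proof
  assume "ev2 (FA f) s t = 0" "ev2 (pderiv (FA f)) s t = 0" "ev2 (map_poly pderiv (FA f)) s t = 0"
  hence "eval f (pt s 1 1 t) = 0" "eval (Defs.pderiv 4 f) (pt s 1 1 t) = 0" "eval (Defs.pderiv 1 f) (pt s 1 1 t) = 0"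
    by (simp_all add: ev2_FA[OF fS] ev2_FA_dt[OF fS] ev2_FA_ds[OF fS])
  thus False using sm1[of "pt s 1 1 t"] by (simp add: in_U_pt eval_logder)
qed

lemma H1B: "ev2 (FB f) t s = 0 \<Longrightarrow> ev2 (pderiv (FB f)) t s = 0 \<Longrightarrow> ev2 (map_poly pderiv (FB f)) t s \<noteq> 0"
proof
  assume "ev2 (FB f) t s = 0" "ev2 (pderiv (FB f)) t s = 0" "ev2 (map_poly pderiv (FB f)) t s = 0"
  hence "eval f (pt s 1 1 t) = 0" "eval (Defs.pderiv 4 f) (pt s 1 1 t) = 0" "eval (Defs.pderiv 1 f) (pt s 1 1 t) = 0"
    by (simp_all add: ev2_FB[OF fS] ev2_FB_dt[OF fS] ev2_FB_ds[OF fS])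
  thus False using sm1[of "pt s 1 1 t"] by (simp add: in_U_pt eval_logder)
qed

lemma fiberA:
  assumes z: "\<And>t. eval f (pt s0 1 1 t) = 0"
  shows False
proof -
  have z': "\<And>t. eval f ((pt s0 1 1 0)(4 := t)) = 0" using z by (simp add: pt_upd)
  have F4z: "\<And>t. eval (Defs.pderiv 4 f) (pt s0 1 1 t) = 0"
    using zero_deriv_line[of "pt s0 1 1 0" 4, OF z'] by (simp add: pt_upd)
  show False
  proof (cases "s0 = 0")
    case True
    thus False using sm1[of "pt s0 1 1 0"] z F4z by (simp add: in_U_pt eval_logder)
  next
    case s0: False
    let ?P = "LP 4 (pt s0 1 1 0) (Defs.pderiv 1 f)"
    have PP: "\<And>t. poly ?P t = eval (Defs.pderiv 1 f) (pt s0 1 1 t)" by (simp add: poly_LP pt_upd)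
    from poly_root_or_const[of ?P] show False
    proof
      assume "\<exists>t. poly ?P t = 0"
      then obtain t0 where "eval (Defs.pderiv 1 f) (pt s0 1 1 t0) = 0" using PP by auto
      thus False using sm1[of "pt s0 1 1 t0"] z F4z by (simp add: in_U_pt eval_logder)
    next
      assume "\<exists>d. \<forall>t. poly ?P t = d"
      then obtain d where d: "\<And>t. eval (Defs.pderiv 1 f) (pt s0 1 1 t) = d" using PP by auto
      have sc: "\<And>g a' b'. in_S_deg r a' b' g \<Longrightarrow> w \<noteq> 0 \<Longrightarrow> eval g (pt s0 w 1 1) = w ^ b' * eval g (pt s0 1 1 (1 / w))"
        for w
      proof -
        fix g a' b' assume g: "in_S_deg r a' b' g" and w: "w \<noteq> 0"
        have "eval g (pt s0 w 1 1) = eval g (scale r 1 w (pt s0 1 1 (1 / w)))"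
          by (rule eval_cong_S[OF in_S_deg_in_S[OF g]]) (auto simp: scale_def w)
        also have "\<dots> = w ^ b' * eval g (pt s0 1 1 (1 / w))" by (simp add: eval_scale[OF g])
        finally show "eval g (pt s0 w 1 1) = w ^ b' * eval g (pt s0 1 1 (1 / w))" .
      qed
      have lf: "eval f (pt s0 0 1 1) = 0"
      proof (rule lim0)
        show "((\<lambda>w. eval f ((pt s0 0 1 1)(2 := w))) \<longlongrightarrow> eval f (pt s0 0 1 1)) (at 0)"
          using tendsto_line[of f "pt s0 0 1 1" 2 0] by (simp add: pt_upd)
        fix w :: complex assume "w \<noteq> 0"
        thus "eval f ((pt s0 0 1 1)(2 := w)) = w ^ 1 * 0" using sc[OF fdeg] z by (simp add: pt_upd)
      qed simp
      have l1: "eval (Defs.pderiv 1 f) (pt s0 0 1 1) = 0"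
      proof (rule lim0)
        show "((\<lambda>w. eval (Defs.pderiv 1 f) ((pt s0 0 1 1)(2 := w))) \<longlongrightarrow> eval (Defs.pderiv 1 f) (pt s0 0 1 1)) (at 0)"
          using tendsto_line[of "Defs.pderiv 1 f" "pt s0 0 1 1" 2 0] by (simp add: pt_upd)
        fix w :: complex assume "w \<noteq> 0"
        thus "eval (Defs.pderiv 1 f) ((pt s0 0 1 1)(2 := w)) = w ^ b * d" using sc[OF deg_p1'] d by (simp add: pt_upd)
      qed (use ab(2) in simp)
      show False using sm2[of "pt s0 0 1 1"] lf l1 by (simp add: in_U_pt eval_logder)
    qed
  qed
qed

lemma fiberB:
  assumes r0: "r = 0" and z: "\<And>s. eval f (pt s 1 1 t0) = 0"
  shows False
proof -
  have z': "\<And>s. eval f ((pt 0 1 1 t0)(1 := s)) = 0" using z by (simp add: pt_upd)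
  have F1z: "\<And>s. eval (Defs.pderiv 1 f) (pt s 1 1 t0) = 0"
    using zero_deriv_line[of "pt 0 1 1 t0" 1, OF z'] by (simp add: pt_upd)
  show False
  proof (cases "t0 = 0")
    case True
    thus False using sm1[of "pt 0 1 1 t0"] z F1z by (simp add: in_U_pt eval_logder)
  next
    case t0: False
    let ?P = "LP 1 (pt 0 1 1 t0) (Defs.pderiv 4 f)"
    have PP: "\<And>s. poly ?P s = eval (Defs.pderiv 4 f) (pt s 1 1 t0)" by (simp add: poly_LP pt_upd)
    from poly_root_or_const[of ?P] show False
    proof
      assume "\<exists>s. poly ?P s = 0"
      then obtain s1 where "eval (Defs.pderiv 4 f) (pt s1 1 1 t0) = 0" using PP by auto
      thus False using sm1[of "pt s1 1 1 t0"] z F1z by (simp add: in_U_pt eval_logder)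
    next
      assume "\<exists>d. \<forall>s. poly ?P s = d"
      then obtain d where d: "\<And>s. eval (Defs.pderiv 4 f) (pt s 1 1 t0) = d" using PP by auto
      have sc: "\<And>g a' b'. in_S_deg r a' b' g \<Longrightarrow> w \<noteq> 0 \<Longrightarrow> eval g (pt 1 1 w t0) = w ^ a' * eval g (pt (1 / w) 1 1 t0)"
        for w
      proof -
        fix g a' b' assume g: "in_S_deg r a' b' g" and w: "w \<noteq> 0"
        have "eval g (pt 1 1 w t0) = eval g (scale r w 1 (pt (1 / w) 1 1 t0))"
          by (rule eval_cong_S[OF in_S_deg_in_S[OF g]]) (auto simp: scale_def w r0)
        also have "\<dots> = w ^ a' * eval g (pt (1 / w) 1 1 t0)" by (simp add: eval_scale[OF g])
        finally show "eval g (pt 1 1 w t0) = w ^ a' * eval g (pt (1 / w) 1 1 t0)" .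
      qed
      have a1: "a \<ge> 1" using a_ge[OF ab fdeg] by simp
      have lf: "eval f (pt 1 1 0 t0) = 0"
      proof (rule lim0)
        show "((\<lambda>w. eval f ((pt 1 1 0 t0)(3 := w))) \<longlongrightarrow> eval f (pt 1 1 0 t0)) (at 0)"
          using tendsto_line[of f "pt 1 1 0 t0" 3 0] by (simp add: pt_upd)
        fix w :: complex assume "w \<noteq> 0"
        thus "eval f ((pt 1 1 0 t0)(3 := w)) = w ^ 1 * 0" using sc[OF fdeg] z by (simp add: pt_upd)
      qed simp
      have l4: "eval (Defs.pderiv 4 f) (pt 1 1 0 t0) = 0"
      proof (rule lim0)
        show "((\<lambda>w. eval (Defs.pderiv 4 f) ((pt 1 1 0 t0)(3 := w))) \<longlongrightarrow> eval (Defs.pderiv 4 f) (pt 1 1 0 t0)) (at 0)"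
          using tendsto_line[of "Defs.pderiv 4 f" "pt 1 1 0 t0" 3 0] by (simp add: pt_upd)
        fix w :: complex assume "w \<noteq> 0"
        thus "eval (Defs.pderiv 4 f) ((pt 1 1 0 t0)(3 := w)) = w ^ a * d"
          using sc[OF deg_p4'] d r0 by (simp add: pt_upd)
      qed (use a1 in simp)
      show False using sm1[of "pt 1 1 0 t0"] lf l4 by (simp add: in_U_pt eval_logder)
    qed
  qed
qed

end

lemma separate:
  fixes x1 x2 x3 x4 y1 y2 y3 y4 F1x F3x F4x F1y F3y F4y c :: complex
  assumes c: "c \<noteq> 0" and x13: "x1 \<noteq> 0 \<or> x3 \<noteq> 0" and y13: "y1 \<noteq> 0 \<or> y3 \<noteq> 0"
    and F4: "F4x \<noteq> 0" "F4y \<noteq> 0" and Fy: "F1y \<noteq> 0 \<or> F3y \<noteq> 0"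
    and E11: "x1 * F1x = c * (y1 * F1y)" and E31: "x3 * F1x = c * (y3 * F1y)"
    and E13: "x1 * F3x = c * (y1 * F3y)" and E33: "x3 * F3x = c * (y3 * F3y)"
    and E44: "x4 * F4x = c * (y4 * F4y)"
    and EA: "x2 * x1 ^ r * F4x = c * (y2 * y1 ^ r * F4y)"
    and EB: "x2 * x3 ^ r * F4x = c * (y2 * y3 ^ r * F4y)"
  shows "\<exists>l u. l \<noteq> 0 \<and> u \<noteq> 0 \<and> y1 = l * x1 \<and> y2 = u * x2 \<and> y3 = l * x3 \<and> y4 = l ^ r * u * x4"
proof -
  obtain Fx Fy' where FF: "Fy' \<noteq> 0" "x1 * Fx = c * (y1 * Fy')" "x3 * Fx = c * (y3 * Fy')"
    using Fy E11 E31 E13 E33 by blast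
  have Fx: "Fx \<noteq> 0"
  proof
    assume "Fx = 0"
    hence "y1 = 0" "y3 = 0" using FF c by auto
    thus False using y13 by simp
  qed
  have "(x1 * y3 - x3 * y1) * Fx = 0"
  proof -
    have "(x1 * y3 - x3 * y1) * Fx = y3 * (x1 * Fx) - y1 * (x3 * Fx)" by (simp add: algebra_simps)
    also have "\<dots> = 0" unfolding FF by (simp add: algebra_simps)
    finally show ?thesis .
  qed
  hence key: "x1 * y3 = x3 * y1" using Fx by simp
  obtain l where l: "l \<noteq> 0" "y1 = l * x1" "y3 = l * x3"
  proof (cases "x1 = 0")
    case False
    have "y3 = (y1 / x1) * x3" using key False by (simp add: field_simps)
    moreover have "y1 / x1 \<noteq> 0" using y13 False \<open>y3 = (y1 / x1) * x3\<close> by auto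
    ultimately show thesis using that[of "y1 / x1"] False by simp
  next
    case True
    hence x3: "x3 \<noteq> 0" using x13 by simp
    have "y1 = 0" using key True x3 by simp
    hence "y3 \<noteq> 0" using y13 by simp
    show thesis using that[of "y3 / x3"] x3 True \<open>y1 = 0\<close> \<open>y3 \<noteq> 0\<close> by simp
  qed
  have E2: "x2 * F4x = c * l ^ r * y2 * F4y"
  proof (cases "x1 = 0")
    case False
    have "x1 ^ r * (x2 * F4x) = x1 ^ r * (c * l ^ r * y2 * F4y)"
      using EA unfolding l(2) by (simp add: power_mult_distrib algebra_simps)
    thus ?thesis using False by simp
  next
    case True
    hence x3: "x3 \<noteq> 0" using x13 by simp
    have "x3 ^ r * (x2 * F4x) = x3 ^ r * (c * l ^ r * y2 * F4y)"
      using EB unfolding l(3) by (simp add: power_mult_distrib algebra_simps)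
    thus ?thesis using x3 by simp
  qed
  define u where "u = F4x / (c * l ^ r * F4y)"
  have u: "u \<noteq> 0" unfolding u_def using F4 c l by simp
  have y2: "y2 = u * x2" unfolding u_def using E2 F4 c l by (simp add: field_simps)
  have y4: "y4 = l ^ r * u * x4" unfolding u_def using E44 F4 c l by (simp add: field_simps)
  show ?thesis using l u y2 y4 by blast
qed

context
  fixes r a b :: nat and f :: mpoly
  assumes ab: "a > r * b" "b > 0" and fdeg: "in_S_deg r a b f" and nd: "nondegenerate f"
begin

lemma fS': "in_S f" using fdeg by (rule in_S_deg_in_S)

definition setA where "setA = {(s,t). ev2 (FA f) s t = 0 \<and> ev2 (pderiv (FA f)) s t = 0}"
definition setB where "setB = {(t,s). ev2 (FB f) t s = 0 \<and> ev2 (pderiv (FB f)) t s = 0}"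
definition setb where "setb = {t. eval f (pt 1 1 0 t) = 0}"
definition setc where "setc = {s. eval f (pt s 0 1 1) = 0}"

lemma finA: "finite setA"
  unfolding setA_def
proof (rule core_lemma)
  show "\<And>s t. ev2 (FA f) s t = 0 \<Longrightarrow> ev2 (pderiv (FA f)) s t = 0 \<Longrightarrow> ev2 (map_poly pderiv (FA f)) s t \<noteq> 0"
    by (rule H1A[OF ab fdeg nd])
  fix s show "\<exists>t. ev2 (FA f) s t \<noteq> 0"
    using fiberA[OF ab fdeg nd, of s] by (auto simp: ev2_FA[OF fS'])
qed

lemma finB: "r = 0 \<Longrightarrow> finite setB"
  unfolding setB_def
proof (rule core_lemma)
  show "\<And>t s. ev2 (FB f) t s = 0 \<Longrightarrow> ev2 (pderiv (FB f)) t s = 0 \<Longrightarrow> ev2 (map_poly pderiv (FB f)) t s \<noteq> 0"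
    by (rule H1B[OF ab fdeg nd])
  fix t assume "r = 0" show "\<exists>s. ev2 (FB f) t s \<noteq> 0"
    using fiberB[OF ab fdeg nd \<open>r = 0\<close>, of t] by (auto simp: ev2_FB[OF fS'])
qed

lemma finb: "finite setb"
proof -
  have "eval f (pt 1 1 0 0) \<noteq> 0"
    using sm1[OF ab fdeg nd, of "pt 1 1 0 0"] by (auto simp: in_U_pt eval_logder)
  hence "LP 4 (pt 1 1 0 0) f \<noteq> 0" using poly_LP[of 4 "pt 1 1 0 0" f 0] by (auto simp: pt_upd)
  hence "finite {t. poly (LP 4 (pt 1 1 0 0) f) t = 0}" by (rule poly_roots_finite)
  thus ?thesis unfolding setb_def by (simp add: poly_LP pt_upd)
qed

lemma finc: "finite setc"
proof -
  have "eval f (pt 0 0 1 1) \<noteq> 0"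
    using sm2[OF ab fdeg nd, of "pt 0 0 1 1"] by (auto simp: in_U_pt eval_logder)
  hence "LP 1 (pt 0 0 1 1) f \<noteq> 0" using poly_LP[of 1 "pt 0 0 1 1" f 0] by (auto simp: pt_upd)
  hence "finite {t. poly (LP 1 (pt 0 0 1 1) f) t = 0}" by (rule poly_roots_finite)
  thus ?thesis unfolding setc_def by (simp add: poly_LP pt_upd)
qed

definition PP where "PP = (\<lambda>(s,t). pt s 1 1 t) ` setA \<union> (if r = 0 then (\<lambda>(t,s). pt s 1 1 t) ` setB else {})
   \<union> (\<lambda>t. pt 1 1 0 t) ` setb \<union> (\<lambda>s. pt s 0 1 1) ` setc \<union> {p. p = pt 1 0 0 1 \<and> in_Z f p}"

lemma finPP: "finite PP"
  unfolding PP_def using finA finB finb finc by auto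

lemma PP_Z: "p \<in> PP \<Longrightarrow> in_Z f p"
  unfolding PP_def setA_def setB_def setb_def setc_def
  by (auto simp: in_Z_def in_U_pt ev2_FA[OF fS'] ev2_FB[OF fS'] split: if_splits)


lemma U13: "in_U x \<Longrightarrow> x 1 \<noteq> 0 \<or> x 3 \<noteq> 0" unfolding in_U_def by auto

lemma good:
  assumes xZ: "in_Z f x" and nx: "\<not> (\<exists>p\<in>PP. hr_equiv r p x)"
  shows "eval (Defs.pderiv 4 f) x \<noteq> 0 \<and> (eval (Defs.pderiv 1 f) x \<noteq> 0 \<or> eval (Defs.pderiv 3 f) x \<noteq> 0)"
proof -
  have xU: "in_U x" and fx: "eval f x = 0" using xZ unfolding in_Z_def by auto
  have inP: "p \<in> PP \<Longrightarrow> hr_equiv r p x \<Longrightarrow> False" for p using nx by blast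
  show ?thesis
  proof (cases "x 3 \<noteq> 0 \<and> x 2 \<noteq> 0")
    case True
    define s where "s = x 1 / x 3"
    define t where "t = x 4 / (x 3 ^ r * x 2)"
    have hr: "hr_equiv r (pt s 1 1 t) x" unfolding hr_equiv_def s_def t_def
      using True by (intro exI[of _ "x 3"] exI[of _ "x 2"]) (simp add: field_simps)
    have fp: "eval f (pt s 1 1 t) = 0" using hr_equiv_zero_iff[OF hr fdeg] fx by simp
    have C1: "eval (Defs.pderiv 4 f) x \<noteq> 0"
    proof
      assume "eval (Defs.pderiv 4 f) x = 0"
      hence "eval (Defs.pderiv 4 f) (pt s 1 1 t) = 0"
        using hr_equiv_zero_iff[OF hr deg_p4'[OF ab fdeg nd]] by simp
      hence "(s, t) \<in> setA" unfolding setA_def using fp by (simp add: ev2_FA[OF fS'] ev2_FA_dt[OF fS'])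
      hence "pt s 1 1 t \<in> PP" unfolding PP_def by force
      thus False using inP hr by blast
    qed
    have C2: "eval (Defs.pderiv 1 f) x \<noteq> 0 \<or> eval (Defs.pderiv 3 f) x \<noteq> 0"
    proof (cases "r = 0")
      case r0: True
      have "eval (Defs.pderiv 1 f) x \<noteq> 0"
      proof
        assume "eval (Defs.pderiv 1 f) x = 0"
        hence "eval (Defs.pderiv 1 f) (pt s 1 1 t) = 0"
          using hr_equiv_zero_iff[OF hr deg_p1'[OF ab fdeg nd]] by simp
        hence "(t, s) \<in> setB" unfolding setB_def using fp by (simp add: ev2_FB[OF fS'] ev2_FB_dt[OF fS'])
        hence "pt s 1 1 t \<in> PP" unfolding PP_def using r0 by force
        thus False using inP hr by blast
      qed
      thus ?thesis by simp
    next
      case r0: False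
      show ?thesis
      proof (rule ccontr)
        assume "\<not> ?thesis"
        hence l1: "eval (logder 1 f) x = 0" and l3: "eval (logder 3 f) x = 0" by (auto simp: eval_logder)
        have "of_nat a * eval f x = eval (logder 1 f) x + eval (logder 3 f) x + of_nat r * eval (logder 4 f) x"
          by (rule euler_a[OF fdeg])
        hence "eval (logder 4 f) x = 0" using l1 l3 fx r0 by simp
        thus False using sm1[OF ab fdeg nd xU fx] l1 by blast
      qed
    qed
    show ?thesis using C1 C2 by blast
  next
    case False
    show ?thesis
    proof (rule ccontr)
      assume "\<not> ?thesis"
      show False
      proof (cases "x 3 \<noteq> 0")
        case x3: True
        hence x2: "x 2 = 0" using False by simp
        hence x4: "x 4 \<noteq> 0" using xU x3 unfolding in_U_def by auto
        define s where "s = x 1 / x 3"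
        have hr: "hr_equiv r (pt s 0 1 1) x" unfolding hr_equiv_def s_def
          using x3 x2 x4 by (intro exI[of _ "x 3"] exI[of _ "x 4 / x 3 ^ r"]) (simp add: field_simps)
        have fp: "eval f (pt s 0 1 1) = 0" using hr_equiv_zero_iff[OF hr fdeg] fx by simp
        hence "pt s 0 1 1 \<in> PP" unfolding PP_def setc_def by force
        thus False using inP hr by blast
      next
        case x3: False
        hence x3: "x 3 = 0" by simp
        hence x1: "x 1 \<noteq> 0" using U13[OF xU] by simp
        show False
        proof (cases "x 2 = 0")
          case x2: False
          define t where "t = x 4 / (x 1 ^ r * x 2)"
          have hr: "hr_equiv r (pt 1 1 0 t) x" unfolding hr_equiv_def t_def
            using x3 x2 x1 by (intro exI[of _ "x 1"] exI[of _ "x 2"]) (simp add: field_simps)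
          have fp: "eval f (pt 1 1 0 t) = 0" using hr_equiv_zero_iff[OF hr fdeg] fx by simp
          hence "pt 1 1 0 t \<in> PP" unfolding PP_def setb_def by force
          thus False using inP hr by blast
        next
          case x2: True
          hence x4: "x 4 \<noteq> 0" using xU x3 unfolding in_U_def by auto
          have hr: "hr_equiv r (pt 1 0 0 1) x" unfolding hr_equiv_def
            using x3 x2 x1 x4 by (intro exI[of _ "x 1"] exI[of _ "x 4 / x 1 ^ r"]) (simp add: field_simps)
          have fp: "eval f (pt 1 0 0 1) = 0" using hr_equiv_zero_iff[OF hr fdeg] fx by simp
          hence "pt 1 0 0 1 \<in> PP" unfolding PP_def by (simp add: in_Z_def in_U_pt)
          thus False using inP hr by blast
        qed
      qed
    qed
  qed
qed

end

theorem mainTheorem6: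
  fixes r a b :: nat and f :: mpoly
  assumes "a > r * b" and "b > 0"
    and "in_S_deg r a b f"
    and "nondegenerate f"
  shows "(\<forall>x. in_Z f x \<longrightarrow> (\<exists>g \<in> J1_deg r a b f. eval g x \<noteq> 0))
    \<and> (\<exists>P. finite P \<and> (\<forall>p \<in> P. in_Z f p) \<and>
         (\<forall>x y. in_Z f x \<and> in_Z f y
            \<and> \<not> (\<exists>p \<in> P. hr_equiv r p x) \<and> \<not> (\<exists>p \<in> P. hr_equiv r p y)
            \<and> (\<exists>c. c \<noteq> 0 \<and> (\<forall>g \<in> J1_deg r a b f. eval g x = c * eval g y))
            \<longrightarrow> hr_equiv r x y))"
proof (intro conjI allI impI)
  note ab = assms(1,2) and fdeg = assms(3) and nd = assms(4)
  fix x assume xZ: "in_Z f x"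
  hence xU: "in_U x" unfolding in_Z_def by simp
  obtain i where i: "i \<in> {1,2,3,4}" "eval (logder i f) x \<noteq> 0"
    using no_common[OF ab fdeg nd xU] by blast
  thus "\<exists>g \<in> J1_deg r a b f. eval g x \<noteq> 0" using logder_J1[OF ab fdeg i(1)] by blast
next
  note ab = assms(1,2) and fdeg = assms(3) and nd = assms(4)
  let ?P = "PP r f"
  show "\<exists>P. finite P \<and> (\<forall>p \<in> P. in_Z f p) \<and>
         (\<forall>x y. in_Z f x \<and> in_Z f y
            \<and> \<not> (\<exists>p \<in> P. hr_equiv r p x) \<and> \<not> (\<exists>p \<in> P. hr_equiv r p y)
            \<and> (\<exists>c. c \<noteq> 0 \<and> (\<forall>g \<in> J1_deg r a b f. eval g x = c * eval g y))
            \<longrightarrow> hr_equiv r x y)"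
  proof (intro exI[of _ ?P] conjI allI impI ballI)
    show "finite ?P" by (rule finPP[OF ab fdeg nd])
    fix p assume "p \<in> ?P" thus "in_Z f p" by (rule PP_Z[OF ab fdeg nd])
  next
    fix x y
    assume H: "in_Z f x \<and> in_Z f y \<and> \<not> (\<exists>p \<in> ?P. hr_equiv r p x) \<and> \<not> (\<exists>p \<in> ?P. hr_equiv r p y)
            \<and> (\<exists>c. c \<noteq> 0 \<and> (\<forall>g \<in> J1_deg r a b f. eval g x = c * eval g y))"
    then obtain c where c: "c \<noteq> 0" and E: "\<And>g. g \<in> J1_deg r a b f \<Longrightarrow> eval g x = c * eval g y" by blast
    have gx: "eval (Defs.pderiv 4 f) x \<noteq> 0 \<and> (eval (Defs.pderiv 1 f) x \<noteq> 0 \<or> eval (Defs.pderiv 3 f) x \<noteq> 0)"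
      using good[OF ab fdeg nd] H by blast
    have gy: "eval (Defs.pderiv 4 f) y \<noteq> 0 \<and> (eval (Defs.pderiv 1 f) y \<noteq> 0 \<or> eval (Defs.pderiv 3 f) y \<noteq> 0)"
      using good[OF ab fdeg nd] H by blast
    have xU: "in_U x" "in_U y" using H unfolding in_Z_def by auto
    have E11: "x 1 * eval (Defs.pderiv 1 f) x = c * (y 1 * eval (Defs.pderiv 1 f) y)"
      using E[of "logder 1 f"] logder_J1[OF ab fdeg, of 1] by (simp add: eval_logder)
    have E33: "x 3 * eval (Defs.pderiv 3 f) x = c * (y 3 * eval (Defs.pderiv 3 f) y)"
      using E[of "logder 3 f"] logder_J1[OF ab fdeg, of 3] by (simp add: eval_logder)
    have E44: "x 4 * eval (Defs.pderiv 4 f) x = c * (y 4 * eval (Defs.pderiv 4 f) y)"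
      using E[of "logder 4 f"] logder_J1[OF ab fdeg, of 4] by (simp add: eval_logder)
    have E31: "x 3 * eval (Defs.pderiv 1 f) x = c * (y 3 * eval (Defs.pderiv 1 f) y)"
      using E[OF sec31[OF ab fdeg]] by (simp add: eval_mult eval_var)
    have E13: "x 1 * eval (Defs.pderiv 3 f) x = c * (y 1 * eval (Defs.pderiv 3 f) y)"
      using E[OF sec13[OF ab fdeg]] by (simp add: eval_mult eval_var)
    have EA: "x 2 * x 1 ^ r * eval (Defs.pderiv 4 f) x = c * (y 2 * y 1 ^ r * eval (Defs.pderiv 4 f) y)"
      using E[OF secA[OF ab fdeg]] by (simp add: eval_mult eval_var eval_pow)
    have EB: "x 2 * x 3 ^ r * eval (Defs.pderiv 4 f) x = c * (y 2 * y 3 ^ r * eval (Defs.pderiv 4 f) y)"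
      using E[OF secB[OF ab fdeg]] by (simp add: eval_mult eval_var eval_pow)
    from separate[OF c U13[OF ab fdeg nd xU(1)] U13[OF ab fdeg nd xU(2)] _ _ _ E11 E31 E13 E33 E44 EA EB] gx gy
    obtain l u where "l \<noteq> 0" "u \<noteq> 0" "y 1 = l * x 1" "y 2 = u * x 2" "y 3 = l * x 3" "y 4 = l ^ r * u * x 4"
      by blast
    thus "hr_equiv r x y" unfolding hr_equiv_def by blast
  qed
qed

end
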